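(* There exist almost discrete Fréchet–Urysohn (Tychonoff) spaces $X$ and $Y$ such that $X\times Y$ is not a weakly Grothendieck space. (For instance, $X$ the countable sequential fan $S_\omega$ and $Y$ the sequential fan $S_{\mathfrak{c}}$ with $2^\omega$ many spines.)
   Context: A space is almost discrete if it has exactly one non-isolated point. $S_\kappa$ denotes the quotient of the disjoint sum of $\kappa$ convergent sequences (with their limits) obtained by identifying all the limit points to one point. $C_p(X)$ is the space of continuous real-valued functions on $X$ with the pointwise convergence topology. A space $Z$ is a $g$-space if every subset $A\subseteq Z$ such that every infinite subset of $A$ has an accumulation point in $Z$ has compact closure in $Z$; $X$ is weakly Grothendieck if $C_p(X)$ is a $g$-space. *)

theory Defs
  imports "HOL-Analysis.Analysis"
begin

definition tychonoff_space :: "'a topology \<Rightarrow> bool" where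
  "tychonoff_space X \<longleftrightarrow> completely_regular_space X \<and> Hausdorff_space X"

definition almost_discrete :: "'a topology \<Rightarrow> bool" where
  "almost_discrete X \<longleftrightarrow> (\<exists>!x. x \<in> topspace X \<and> \<not> openin X {x})"

definition frechet_urysohn :: "'a topology \<Rightarrow> bool" where
  "frechet_urysohn X \<longleftrightarrow>
     (\<forall>A x. A \<subseteq> topspace X \<and> x \<in> X closure_of A \<longrightarrow>
        (\<exists>\<sigma>::nat \<Rightarrow> 'a. range \<sigma> \<subseteq> A \<and> limitin X \<sigma> x sequentially))"

text \<open>C_p(X): continuous real functions on X (extensional, i.e. undefined off the
  carrier) with the topology of pointwise convergence, as a subspace of the product R^X.\<close>
definition Cp :: "'a topology \<Rightarrow> ('a \<Rightarrow> real) topology" where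
  "Cp X = subtopology (product_topology (\<lambda>_. euclideanreal) (topspace X))
            {f \<in> topspace (product_topology (\<lambda>_. euclideanreal) (topspace X)).
               continuous_map X euclideanreal f}"

definition g_space :: "'a topology \<Rightarrow> bool" where
  "g_space Z \<longleftrightarrow>
     (\<forall>A. A \<subseteq> topspace Z \<and>
          (\<forall>B. B \<subseteq> A \<and> infinite B \<longrightarrow> (\<exists>z \<in> topspace Z. z \<in> Z derived_set_of B))
        \<longrightarrow> compactin Z (Z closure_of A))"

definition weakly_grothendieck :: "'a topology \<Rightarrow> bool" where
  "weakly_grothendieck X \<longleftrightarrow> g_space (Cp X)"

end

theory Submission
  imports Defs "HOL-Library.Equipollence"
begin


lemma cont_clopen:
  assumes "openin X W" "closedin X W"
  shows "continuous_map X euclideanreal (\<lambda>z. if z \<in> W then a else b)"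
  unfolding continuous_map
proof (intro conjI allI impI)
  fix U :: "real set" assume "openin euclideanreal U"
  have W: "W \<subseteq> topspace X" using assms(1) openin_subset by blast
  have "{x \<in> topspace X. (if x \<in> W then a else b) \<in> U} =
        (if a \<in> U then W else {}) \<union> (if b \<in> U then topspace X - W else {})"
    using W by auto
  moreover have "openin X (topspace X - W)" using assms(2) closedin_def by blast
  ultimately show "openin X {x \<in> topspace X. (if x \<in> W then a else b) \<in> U}"
    using assms(1) by (auto intro: openin_Un)
qed auto

locale fan_loc =
  fixes v :: 'a and I :: "'i set" and e :: "'i \<Rightarrow> nat \<Rightarrow> 'a"
  assumes einj: "\<And>i j k m. i \<in> I \<Longrightarrow> j \<in> I \<Longrightarrow> e i k = e j m \<Longrightarrow> i = j \<and> k = m"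
    and env: "\<And>i k. i \<in> I \<Longrightarrow> e i k \<noteq> v"
    and Ine: "I \<noteq> {}"
begin

definition S where "S = insert v {e i k | i k. i \<in> I}"

definition opn where
  "opn U \<longleftrightarrow> U \<subseteq> S \<and> (v \<in> U \<longrightarrow> (\<forall>i\<in>I. \<exists>N. \<forall>k\<ge>N. e i k \<in> U))"

lemma istop: "istopology opn"
  unfolding istopology_def
proof (intro conjI allI impI ballI)
  fix U V assume U: "opn U" and V: "opn V"
  show "opn (U \<inter> V)"
    unfolding opn_def
  proof (intro conjI impI ballI)
    show "U \<inter> V \<subseteq> S" using U opn_def by auto
    fix i assume "v \<in> U \<inter> V" "i \<in> I"
    then obtain N1 N2 where "\<forall>k\<ge>N1. e i k \<in> U" "\<forall>k\<ge>N2. e i k \<in> V"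
      using U V unfolding opn_def by blast
    then show "\<exists>N. \<forall>k\<ge>N. e i k \<in> U \<inter> V" by (intro exI[of _ "max N1 N2"]) auto
  qed
next
  fix K assume K: "\<forall>U\<in>K. opn U"
  show "opn (\<Union>K)"
    unfolding opn_def
  proof (intro conjI impI ballI)
    show "\<Union>K \<subseteq> S" using K opn_def by auto
    fix i assume "v \<in> \<Union>K" "i \<in> I"
    then obtain U where "U \<in> K" "v \<in> U" by auto
    then obtain N where "\<forall>k\<ge>N. e i k \<in> U" using K \<open>i \<in> I\<close> unfolding opn_def by blast
    then show "\<exists>N. \<forall>k\<ge>N. e i k \<in> \<Union>K" using \<open>U \<in> K\<close> by blast
  qed
qed

definition top where "top = topology opn"

lemma openin_top: "openin top U \<longleftrightarrow> opn U"
  by (simp add: top_def istop)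

lemma S_open: "opn S"
  unfolding opn_def S_def by auto

lemma topspace_top: "topspace top = S"
proof -
  have "topspace top = \<Union>{U. opn U}" by (simp add: topspace_def openin_top)
  also have "\<dots> = S" using S_open by (auto simp: opn_def)
  finally show ?thesis .
qed

lemma open_nov: "U \<subseteq> S \<Longrightarrow> v \<notin> U \<Longrightarrow> openin top U"
  by (simp add: openin_top opn_def)

lemma open_sing: "x \<in> S \<Longrightarrow> x \<noteq> v \<Longrightarrow> openin top {x}"
  by (rule open_nov) auto

lemma open_minus: assumes "x \<noteq> v" shows "openin top (S - {x})"
  unfolding openin_top opn_def
proof (intro conjI impI ballI)
  fix i assume "i \<in> I"
  show "\<exists>N. \<forall>k\<ge>N. e i k \<in> S - {x}"
  proof (cases "\<exists>k0. x = e i k0")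
    case True
    then obtain k0 where k0: "x = e i k0" by auto
    show ?thesis
    proof (intro exI[of _ "Suc k0"] allI impI)
      fix k assume "Suc k0 \<le> k"
      then have "k \<noteq> k0" by simp
      then have "e i k \<noteq> x" using einj[OF \<open>i\<in>I\<close> \<open>i\<in>I\<close>] k0 by blast
      then show "e i k \<in> S - {x}" using \<open>i\<in>I\<close> by (auto simp: S_def)
    qed
  next
    case False
    then show ?thesis using \<open>i\<in>I\<close> by (auto simp: S_def)
  qed
qed auto

lemma open_tail: "openin top (insert v {e i k | i k. i \<in> I \<and> k \<ge> g i})"
  unfolding openin_top opn_def by (auto simp: S_def)

lemma opn_tailE:
  assumes "openin top U" "v \<in> U"
  obtains g where "\<And>i k. i \<in> I \<Longrightarrow> k \<ge> g i \<Longrightarrow> e i k \<in> U"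
proof -
  have "\<forall>i\<in>I. \<exists>N. \<forall>k\<ge>N. e i k \<in> U" using assms by (simp add: openin_top opn_def)
  then obtain g where "\<forall>i\<in>I. \<forall>k\<ge>g i. e i k \<in> U" by metis
  then show ?thesis using that by blast
qed

lemma almost_discrete_top: "almost_discrete top"
  unfolding almost_discrete_def
proof (rule ex1I[of _ v])
  show "v \<in> topspace top \<and> \<not> openin top {v}"
  proof
    show "v \<in> topspace top" by (simp add: topspace_top S_def)
    show "\<not> openin top {v}"
    proof
      assume "openin top {v}"
      then obtain g where "\<And>i k. i \<in> I \<Longrightarrow> k \<ge> g i \<Longrightarrow> e i k \<in> {v}"
        using opn_tailE by blast
      moreover obtain i where "i \<in> I" using Ine by auto
      ultimately show False using env by blast
    qed
  qed
next
  fix x assume "x \<in> topspace top \<and> \<not> openin top {x}"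
  then show "x = v" using open_sing topspace_top by blast
qed

lemma frechet_top: "frechet_urysohn top"
  unfolding frechet_urysohn_def
proof (intro allI impI)
  fix A x assume H: "A \<subseteq> topspace top \<and> x \<in> top closure_of A"
  then have "x \<in> topspace top" by (simp add: in_closure_of)
  then have xS: "x \<in> S" by (simp add: topspace_top)
  show "\<exists>\<sigma>::nat \<Rightarrow> 'a. range \<sigma> \<subseteq> A \<and> limitin top \<sigma> x sequentially"
  proof (cases "x \<in> A")
    case True
    then show ?thesis using xS unfolding limitin_sequentially topspace_top by (intro exI[of _ "\<lambda>_. x"]) blast
  next
    case False
    have xv: "x = v"
    proof (rule ccontr)
      assume "x \<noteq> v"
      then have "openin top {x}" using open_sing xS by auto
      then show False using H False unfolding in_closure_of by blast
    qed
    have "\<exists>i\<in>I. infinite {k. e i k \<in> A}"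
    proof (rule ccontr)
      assume "\<not> ?thesis"
      then have fin: "\<forall>i\<in>I. \<exists>N. \<forall>k. e i k \<in> A \<longrightarrow> k < N"
        by (simp add: finite_nat_set_iff_bounded)
      let ?W = "insert v {e i k | i k. i \<in> I \<and> e i k \<notin> A}"
      have "openin top ?W"
        unfolding openin_top opn_def
      proof (intro conjI impI ballI)
        fix i assume "i \<in> I"
        then obtain N where N: "\<forall>k. e i k \<in> A \<longrightarrow> k < N" using fin by blast
        show "\<exists>N. \<forall>k\<ge>N. e i k \<in> ?W"
        proof (intro exI[of _ N] allI impI)
          fix k assume "N \<le> k"
          then have "e i k \<notin> A" using N by (meson not_le)
          then show "e i k \<in> ?W" using \<open>i \<in> I\<close> by blast
        qed
      qed (auto simp: S_def)
      moreover have "v \<in> ?W" by simp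
      ultimately show False using H False xv unfolding in_closure_of by blast
    qed
    then obtain i where i: "i \<in> I" and inf: "infinite {k. e i k \<in> A}" by auto
    let ?K = "{k. e i k \<in> A}"
    show ?thesis
    proof (intro exI[of _ "\<lambda>n. e i (enumerate ?K n)"] conjI)
      show "range (\<lambda>n. e i (enumerate ?K n)) \<subseteq> A"
        using enumerate_in_set[OF inf] by auto
      show "limitin top (\<lambda>n. e i (enumerate ?K n)) x sequentially"
        unfolding limitin_sequentially
      proof (intro conjI allI impI)
        show "x \<in> topspace top" using xS topspace_top by simp
        fix U assume "openin top U \<and> x \<in> U"
        then obtain g where "\<And>i k. i \<in> I \<Longrightarrow> k \<ge> g i \<Longrightarrow> e i k \<in> U"
          using opn_tailE xv by blast
        then show "\<exists>N. \<forall>n\<ge>N. e i (enumerate ?K n) \<in> U"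
        proof (intro exI[of _ "g i"] allI impI)
          fix n assume "g i \<le> n"
          then have "g i \<le> enumerate ?K n" using le_enumerate[OF inf, of n] by linarith
          then show "e i (enumerate ?K n) \<in> U" using \<open>\<And>i k. i \<in> I \<Longrightarrow> k \<ge> g i \<Longrightarrow> e i k \<in> U\<close> i by blast
        qed
      qed
    qed
  qed
qed

lemma tychonoff_top: "tychonoff_space top"
  unfolding tychonoff_space_def
proof
  show "Hausdorff_space top"
    unfolding Hausdorff_space_def topspace_top
  proof (intro allI impI)
    fix x y assume H: "x \<in> S \<and> y \<in> S \<and> x \<noteq> y"
    show "\<exists>U V. openin top U \<and> openin top V \<and> x \<in> U \<and> y \<in> V \<and> disjnt U V"
    proof (cases "x = v")
      case False
      then show ?thesis using H open_sing open_minus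
        by (intro exI[of _ "{x}"] exI[of _ "S - {x}"]) auto
    next
      case True
      then have "y \<noteq> v" using H by auto
      then show ?thesis using H open_sing open_minus
        by (intro exI[of _ "S - {y}"] exI[of _ "{y}"]) (auto simp: disjnt_def)
    qed
  qed
  show "completely_regular_space top"
    unfolding completely_regular_space_def
  proof (intro allI impI)
    fix C x assume H: "closedin top C \<and> x \<in> topspace top - C"
    have "C \<subseteq> topspace top" using H closedin_subset by auto
    then have CS: "C \<subseteq> S" by (simp add: topspace_top)
    have "\<exists>W. openin top W \<and> closedin top W \<and> C \<subseteq> W \<and> x \<notin> W"
    proof (cases "x = v")
      case True
      then show ?thesis using H CS open_nov by blast
    next
      case False
      have "closedin top (S - {x})"
        unfolding closedin_def topspace_top using open_sing[of x] False H topspace_top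
        by (auto simp: Diff_Diff_Int Int_absorb1)
      then show ?thesis using open_minus[OF False] CS H by (intro exI[of _ "S - {x}"]) auto
    qed
    then obtain W where W: "openin top W" "closedin top W" "C \<subseteq> W" "x \<notin> W" by blast
    show "\<exists>f::'a\<Rightarrow>real. continuous_map top (top_of_set {0..1}) f \<and> f x = 0 \<and> f ` C \<subseteq> {1}"
      using W cont_clopen[OF W(1,2), of 1 0]
      by (intro exI[of _ "\<lambda>z. if z \<in> W then 1 else 0"]) (auto simp: continuous_map_in_subtopology)
  qed
qed

end



definition eX :: "nat \<Rightarrow> nat \<Rightarrow> nat" where "eX n m = Suc (prod_encode (n, m))"
definition eY :: "real \<Rightarrow> nat \<Rightarrow> real" where "eY a k = a + real k"

interpretation fX: fan_loc 0 UNIV eX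
proof
  fix i j k m assume "eX i k = eX j m"
  then have "prod_encode (i, k) = prod_encode (j, m)" by (simp add: eX_def)
  then show "i = j \<and> k = m" using inj_prod_encode[of UNIV] by (auto dest: injD)
qed (auto simp: eX_def)

lemma eY_inj:
  assumes "a \<in> {0..<1}" "b \<in> {0..<1}" "eY a k = eY b m"
  shows "a = b \<and> k = m"
proof -
  have e: "a + real k = b + real m" using assms(3) by (simp add: eY_def)
  have "real k < real m + 1" "real m < real k + 1" using assms(1,2) e by auto
  then have "k < m + 1" "m < k + 1" by linarith+
  then have "k = m" by linarith
  then show ?thesis using e by simp
qed

interpretation fY: fan_loc "-1" "{0..<1}" eY
proof
  fix i j k m assume "i \<in> {0..<1::real}" "j \<in> {0..<1::real}" "eY i k = eY j m"
  then show "i = j \<and> k = m" using eY_inj by blast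
next
  fix i k assume "i \<in> {0..<1::real}"
  then show "eY i k \<noteq> -1" by (auto simp: eY_def)
qed auto

definition psi :: "nat set \<Rightarrow> real" where
  "psi = (SOME \<psi>. inj \<psi> \<and> range \<psi> \<subseteq> {0..<1})"

lemma psi: "inj psi" "psi x \<in> {0..<1}"
proof -
  have "\<exists>\<psi>::nat set \<Rightarrow> real. inj \<psi> \<and> range \<psi> \<subseteq> {0..<1}"
    using nat_sets_lepoll_reals01 unfolding lepoll_def by blast
  then have "inj psi \<and> range psi \<subseteq> {0..<1}" unfolding psi_def by (rule someI_ex)
  then show "inj psi" "psi x \<in> {0..<1}" by blast+
qed

definition gr :: "(nat \<Rightarrow> nat) \<Rightarrow> nat set" where "gr f = {prod_encode (n, f n) | n. True}"

lemma gr_inj: "inj gr"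
proof (rule injI)
  fix f g assume "gr f = gr g"
  show "f = g"
  proof
    fix n
    have "prod_encode (n, f n) \<in> gr f" by (auto simp: gr_def)
    then have "prod_encode (n, f n) \<in> gr g" using \<open>gr f = gr g\<close> by simp
    then obtain m where "prod_encode (n, f n) = prod_encode (m, g m)" by (auto simp: gr_def)
    then have "(n, f n) = (m, g m)" using inj_prod_encode[of UNIV] by (auto dest: injD)
    then show "f n = g n" by auto
  qed
qed

definition enc :: "(nat \<Rightarrow> nat) \<Rightarrow> real" where "enc f = psi (gr f)"

lemma enc_inj: "inj enc"
  unfolding enc_def using psi(1) gr_inj by (simp add: inj_def)

lemma enc_range: "enc f \<in> {0..<1}"
  unfolding enc_def by (rule psi(2))

definition hh :: "real \<Rightarrow> nat \<Rightarrow> nat" where "hh a = inv enc a"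

lemma hh_enc: "hh (enc f) = f"
  by (simp add: hh_def enc_inj)

definition T :: "(nat \<times> real) set" where
  "T = {(eX n (hh a n), eY a n) | a n. a \<in> {0..<1}}"

abbreviation Z where "Z \<equiv> prod_topology fX.top fY.top"

lemma topspace_Z: "topspace Z = fX.S \<times> fY.S"
  by (simp add: fX.topspace_top fY.topspace_top)

lemma T_sub: "T \<subseteq> topspace Z"
  unfolding topspace_Z T_def fX.S_def fY.S_def by blast

lemma T_open: assumes "W \<subseteq> T" shows "openin Z W"
  unfolding openin_prod_topology_alt
proof (intro allI impI)
  fix x y assume "(x, y) \<in> W"
  then obtain a n where a: "a \<in> {0..<1}" and xy: "x = eX n (hh a n)" "y = eY a n"
    using assms unfolding T_def by blast
  have "openin fX.top {x}" using xy by (intro fX.open_sing) (auto simp: fX.S_def eX_def)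
  moreover have "openin fY.top {y}" using xy a fY.env
    by (intro fY.open_sing) (auto simp: fY.S_def)
  ultimately show "\<exists>U V. openin fX.top U \<and> openin fY.top V \<and> x \<in> U \<and> y \<in> V \<and> U \<times> V \<subseteq> W"
    using \<open>(x, y) \<in> W\<close> by (intro exI[of _ "{x}"] exI[of _ "{y}"]) auto
qed

lemma frac_eY: assumes "a \<in> {0..<1}" shows "frac (eY a n) = a"
proof -
  have "\<lfloor>a + real n\<rfloor> = int n" by (rule floor_unique) (use assms in auto)
  then show ?thesis by (simp add: eY_def frac_def)
qed


lemma S_X_cases: "x \<in> fX.S \<Longrightarrow> x = 0 \<or> (\<exists>n m. x = eX n m)"
  by (auto simp: fX.S_def)

lemma S_Y_cases: "y \<in> fY.S \<Longrightarrow> y = -1 \<or> (\<exists>a k. a \<in> {0..<1} \<and> y = eY a k)"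
  by (auto simp: fY.S_def)

lemma eX_nz: "eX n m \<noteq> 0" by (simp add: eX_def)
lemma eX_S: "eX n m \<in> fX.S" by (auto simp: fX.S_def)
lemma eY_S: "a \<in> {0..<1} \<Longrightarrow> eY a m \<in> fY.S" by (auto simp: fY.S_def)
lemma eY_nv: "a \<in> {0..<1} \<Longrightarrow> eY a m \<noteq> -1" using fY.env by auto
lemma eX_inj: "eX n m = eX n' m' \<Longrightarrow> n = n' \<and> m = m'" using fX.einj by blast

lemma T_memE:
  assumes "p \<in> T"
  obtains a n where "a \<in> {0..<1}" "p = (eX n (hh a n), eY a n)"
  using assms unfolding T_def by blast

lemma T_closed:
  assumes WT: "W \<subseteq> T" and cW: "countable W"
  shows "closedin Z W"
  unfolding closedin_def
proof
  show "W \<subseteq> topspace Z" using WT T_sub by blast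
  show "openin Z (topspace Z - W)"
    unfolding openin_prod_topology_alt
  proof (intro allI impI)
    fix x y assume xy: "(x, y) \<in> topspace Z - W"
    then have xS: "x \<in> fX.S" and yS: "y \<in> fY.S" and nW: "(x, y) \<notin> W" using topspace_Z by auto
    have "\<exists>U V. openin fX.top U \<and> openin fY.top V \<and> x \<in> U \<and> y \<in> V \<and> U \<subseteq> fX.S \<and> V \<subseteq> fY.S
               \<and> (U \<times> V) \<inter> W = {}"
    proof (cases "x = 0")
      case x0: True
      show ?thesis
      proof (cases "y = -1")
        case y0: True
        show ?thesis
        proof (cases "W = {}")
          case True
          then show ?thesis using xS yS fX.S_open fY.S_open
            by (intro exI[of _ fX.S] exI[of _ fY.S]) (auto simp: fX.openin_top fY.openin_top)
        next
          case False
          define L where "L = (\<lambda>z. frac (snd z)) ` W"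
          have cL: "countable L" using cW unfolding L_def by simp
          have L0: "L \<noteq> {}" using False unfolding L_def by simp
          define ee where "ee = from_nat_into L"
          have rng: "range ee = L" unfolding ee_def using cL L0 by simp
          define f where "f n = Suc (\<Sum>i\<le>n. hh (ee i) n)" for n
          define g where "g a = Suc (LEAST i. ee i = a)" for a
          define U where "U = insert 0 {eX i k | i k. i \<in> UNIV \<and> k \<ge> f i}"
          define V where "V = insert (-1) {eY i k | i k. i \<in> {0..<1} \<and> k \<ge> g i}"
          have oU: "openin fX.top U" unfolding U_def by (rule fX.open_tail)
          have oV: "openin fY.top V" unfolding V_def by (rule fY.open_tail)
          have disj: "(U \<times> V) \<inter> W = {}"
          proof (rule ccontr)
            assume "(U \<times> V) \<inter> W \<noteq> {}"
            then obtain p where pp: "p \<in> (U \<times> V) \<inter> W" by blast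
            then have pU: "fst p \<in> U" and pV: "snd p \<in> V" and pW: "p \<in> W" by (auto simp: mem_Times_iff)
            then obtain a n where a: "a \<in> {0..<1}" and p: "p = (eX n (hh a n), eY a n)"
              using WT T_memE by blast
            have "frac (snd p) = a" using p frac_eY[OF a] by simp
            then have "a \<in> L" unfolding L_def using pW by (metis rev_image_eqI)
            then have ex: "\<exists>i. ee i = a" using rng by blast
            define i where "i = (LEAST i. ee i = a)"
            have eei: "ee i = a" unfolding i_def using ex by (rule LeastI_ex)
            have "eX n (hh a n) \<in> U" using pU p by simp
            then obtain n' m where "eX n (hh a n) = eX n' m" "m \<ge> f n'"
              unfolding U_def using eX_nz by blast
            then have hf: "hh a n \<ge> f n" using eX_inj by blast
            have "eY a n \<in> V" using pV p by simp
            then obtain b k where "b \<in> {0..<1}" "eY a n = eY b k" "k \<ge> g b"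
              unfolding V_def using eY_nv[OF a] by blast
            then have "n \<ge> g a" using eY_inj[OF a] by blast
            then have "i \<le> n" unfolding g_def i_def by simp
            then have "hh (ee i) n \<le> (\<Sum>j\<le>n. hh (ee j) n)"
              by (intro member_le_sum) auto
            then show False using hf eei unfolding f_def by simp
          qed
          show ?thesis
            using oU oV disj x0 y0 openin_subset[OF oU] openin_subset[OF oV]
            by (intro exI[of _ U] exI[of _ V]) (auto simp: U_def V_def fX.topspace_top fY.topspace_top)
        qed
      next
        case y1: False
        then obtain a0 k0 where a0: "a0 \<in> {0..<1}" and y: "y = eY a0 k0" using S_Y_cases yS by blast
        let ?U = "fX.S - {eX k0 (hh a0 k0)}"
        have "openin fX.top ?U" using eX_nz by (intro fX.open_minus) auto
        moreover have "openin fY.top {y}" using yS y eY_nv[OF a0] by (intro fY.open_sing) auto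
        moreover have "(?U \<times> {y}) \<inter> W = {}"
        proof (rule ccontr)
          assume "(?U \<times> {y}) \<inter> W \<noteq> {}"
          then obtain p where pp: "p \<in> (?U \<times> {y}) \<inter> W" by blast
          then have pU: "fst p \<in> ?U" and pV: "snd p = y" and pW: "p \<in> W" by (auto simp: mem_Times_iff)
          then obtain a n where a: "a \<in> {0..<1}" and p: "p = (eX n (hh a n), eY a n)"
            using WT T_memE by blast
          have "a = a0 \<and> n = k0" using eY_inj[OF a a0] pV p y by simp
          then show False using pU p by simp
        qed
        ultimately show ?thesis using x0 xS yS eX_nz
          by (intro exI[of _ ?U] exI[of _ "{y}"]) auto
      qed
    next
      case x1: False
      then obtain n0 m0 where x: "x = eX n0 m0" using S_X_cases xS by blast
      show ?thesis
      proof (cases "y = -1")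
        case y0: True
        define V where "V = insert (-1) {eY i k | i k. i \<in> {0..<1} \<and> k \<ge> (\<lambda>_. Suc n0) i}"
        have oV: "openin fY.top V" unfolding V_def by (rule fY.open_tail)
        have "openin fX.top {x}" using xS x1 by (intro fX.open_sing) auto
        moreover have "({x} \<times> V) \<inter> W = {}"
        proof (rule ccontr)
          assume "({x} \<times> V) \<inter> W \<noteq> {}"
          then obtain p where pp: "p \<in> ({x} \<times> V) \<inter> W" by blast
          then have pU: "fst p = x" and pV: "snd p \<in> V" and pW: "p \<in> W" by (auto simp: mem_Times_iff)
          then obtain a n where a: "a \<in> {0..<1}" and p: "p = (eX n (hh a n), eY a n)"
            using WT T_memE by blast
          have "eX n (hh a n) = eX n0 m0" using pU p x by simp
          then have "n = n0" using eX_inj by blast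
          have "eY a n \<in> V" using pV p by simp
          then obtain b k where "b \<in> {0..<1}" "eY a n = eY b k" "k \<ge> Suc n0"
            unfolding V_def using eY_nv[OF a] by blast
          then have "n \<ge> Suc n0" using eY_inj[OF a] by blast
          then show False using \<open>n = n0\<close> by simp
        qed
        ultimately show ?thesis using oV xS y0 openin_subset[OF oV]
          by (intro exI[of _ "{x}"] exI[of _ V]) (auto simp: V_def fY.topspace_top)
      next
        case y1: False
        have "openin fX.top {x}" using xS x1 by (intro fX.open_sing) auto
        moreover have "openin fY.top {y}" using yS y1 by (intro fY.open_sing) auto
        ultimately show ?thesis using xS yS nW
          by (intro exI[of _ "{x}"] exI[of _ "{y}"]) auto
      qed
    qed
    then obtain U V where "openin fX.top U" "openin fY.top V" "x \<in> U" "y \<in> V" "U \<subseteq> fX.S"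
      "V \<subseteq> fY.S" "(U \<times> V) \<inter> W = {}" by blast
    then show "\<exists>U V. openin fX.top U \<and> openin fY.top V \<and> x \<in> U \<and> y \<in> V \<and> U \<times> V \<subseteq> topspace Z - W"
      by (intro exI[of _ U] exI[of _ V]) (auto simp: fX.topspace_top fY.topspace_top)
  qed
qed



lemma T_closure: "(0, -1) \<in> Z closure_of T"
  unfolding in_closure_of
proof (intro conjI allI impI)
  show "(0, -1) \<in> topspace Z" by (simp add: fX.topspace_top fY.topspace_top fX.S_def fY.S_def)
  fix W assume H: "(0, -1) \<in> W \<and> openin Z W"
  then obtain U V where UV: "openin fX.top U" "openin fY.top V" "0 \<in> U" "-1 \<in> V" "U \<times> V \<subseteq> W"
    unfolding openin_prod_topology_alt by blast
  obtain f where f: "\<And>i k. i \<in> UNIV \<Longrightarrow> k \<ge> f i \<Longrightarrow> eX i k \<in> U"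
    using fX.opn_tailE[OF UV(1,3)] by blast
  obtain g where g: "\<And>i k. i \<in> {0..<1} \<Longrightarrow> k \<ge> g i \<Longrightarrow> eY i k \<in> V"
    using fY.opn_tailE[OF UV(2,4)] by blast
  define a where "a = enc f"
  define n where "n = g a"
  have a: "a \<in> {0..<1}" unfolding a_def by (rule enc_range)
  have ha: "hh a = f" unfolding a_def by (rule hh_enc)
  have "(eX n (hh a n), eY a n) \<in> T" unfolding T_def using a by blast
  moreover have "(eX n (hh a n), eY a n) \<in> U \<times> V" using f g a ha n_def by auto
  ultimately show "\<exists>y. y \<in> T \<and> y \<in> W" using UV(5) by blast
qed

lemma T_not_closed: "\<not> closedin Z T"
proof
  assume "closedin Z T"
  then have "Z closure_of T = T" by (rule closure_of_closedin)
  then have "(0, -1) \<in> T" using T_closure by simp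
  then show False using eX_nz by (auto simp: T_def)
qed

definition ind :: "(nat \<times> real) set \<Rightarrow> (nat \<times> real \<Rightarrow> real)" where
  "ind W = restrict (\<lambda>z. if z \<in> W then 1 else 0) (topspace Z)"

lemma ind_cont:
  assumes "W \<subseteq> T" "countable W"
  shows "continuous_map Z euclideanreal (ind W)"
  by (rule continuous_map_eq[OF cont_clopen[OF T_open[OF assms(1)] T_closed[OF assms], of 1 0]])
     (simp add: ind_def)

lemma ind_T_not_cont: "\<not> continuous_map Z euclideanreal (ind T)"
proof
  assume c: "continuous_map Z euclideanreal (ind T)"
  have "closedin euclideanreal {1::real}" using closed_closedin closed_singleton by blast
  then have "closedin Z {z \<in> topspace Z. ind T z \<in> {1}}"
    by (rule closedin_continuous_map_preimage[OF c])
  moreover have "{z \<in> topspace Z. ind T z \<in> {1}} = T"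
    using T_sub by (auto simp: ind_def)
  ultimately show False using T_not_closed by simp
qed

abbreviation P where "P \<equiv> product_topology (\<lambda>_. euclideanreal) (topspace Z)"
abbreviation CC where "CC \<equiv> {f \<in> topspace P. continuous_map Z euclideanreal f}"

lemma Cp_Z: "Cp Z = subtopology P CC"
  by (simp add: Cp_def)

lemma ind_P: "ind W \<in> topspace P"
  by (simp add: ind_def)

lemma topspace_Cp: "topspace (Cp Z) = CC"
  unfolding Cp_Z topspace_subtopology by blast

definition AA where "AA = ind ` {F. finite F \<and> F \<subseteq> T}"

lemma AA_sub: "AA \<subseteq> CC"
proof
  fix b assume "b \<in> AA"
  then obtain F where F: "finite F" "F \<subseteq> T" "b = ind F" unfolding AA_def by blast
  have "continuous_map Z euclideanreal (ind F)" using F(2) countable_finite[OF F(1)] by (rule ind_cont)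
  then show "b \<in> CC" using ind_P F(3) by simp
qed

lemma ind_T_closure: "ind T \<in> P closure_of AA"
  unfolding in_closure_of
proof (intro conjI allI impI)
  show "ind T \<in> topspace P" by (rule ind_P)
  fix W assume H: "ind T \<in> W \<and> openin P W"
  then have "openin P W" by simp
  then have "\<forall>x \<in> W. \<exists>U. finite {i \<in> topspace Z. U i \<noteq> topspace euclideanreal} \<and>
                 (\<forall>i \<in> topspace Z. openin euclideanreal (U i)) \<and> x \<in> Pi\<^sub>E (topspace Z) U \<and> Pi\<^sub>E (topspace Z) U \<subseteq> W"
    by (rule openin_product_topology_alt[THEN iffD1])
  from bspec[OF this] H
  obtain U where U: "finite {i \<in> topspace Z. U i \<noteq> topspace euclideanreal}"
     "\<forall>i \<in> topspace Z. openin euclideanreal (U i)" "ind T \<in> Pi\<^sub>E (topspace Z) U"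
     "Pi\<^sub>E (topspace Z) U \<subseteq> W"
    by blast
  define J where "J = {i \<in> topspace Z. U i \<noteq> topspace euclideanreal}"
  define F where "F = T \<inter> J"
  have "finite J" using U(1) unfolding J_def .
  then have F: "finite F" "F \<subseteq> T" unfolding F_def by auto
  have "ind F \<in> Pi\<^sub>E (topspace Z) U"
  proof (rule PiE_I)
    fix z assume z: "z \<in> topspace Z"
    show "ind F z \<in> U z"
    proof (cases "z \<in> J")
      case True
      then have "ind F z = ind T z" using z by (simp add: ind_def F_def)
      then show ?thesis using U(3) z by (auto simp: PiE_iff)
    next
      case False
      then show ?thesis using z by (simp add: J_def)
    qed
  next
    fix z assume "z \<notin> topspace Z"
    then show "ind F z = undefined" by (simp add: ind_def)
  qed
  then show "\<exists>y. y \<in> AA \<and> y \<in> W" using F U(4) unfolding AA_def by blast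
qed

lemma not_compact: "\<not> compactin (Cp Z) (Cp Z closure_of AA)"
proof
  assume c: "compactin (Cp Z) (Cp Z closure_of AA)"
  define K where "K = Cp Z closure_of AA"
  have cK: "compactin P K" using c unfolding K_def Cp_Z compactin_subtopology by blast
  have "Hausdorff_space P" by (simp add: Hausdorff_space_product_topology)
  then have clK: "closedin P K" using cK by (rule compactin_imp_closedin)
  have "AA \<subseteq> K" unfolding K_def using AA_sub topspace_Cp by (metis closure_of_subset)
  then have "P closure_of AA \<subseteq> K" using clK by (rule closure_of_minimal)
  then have "ind T \<in> K" using ind_T_closure by blast
  moreover have "K \<subseteq> CC" unfolding K_def using closure_of_subset_topspace topspace_Cp by metis
  ultimately show False using ind_T_not_cont by blast
qed



lemma accum:
  assumes BA: "B \<subseteq> AA" and infB: "infinite B"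
  shows "\<exists>z \<in> topspace (Cp Z). z \<in> Cp Z derived_set_of B"
proof -
  obtain f0 :: "nat \<Rightarrow> _" where f0: "inj f0" "range f0 \<subseteq> B"
    using infinite_countable_subset[OF infB] by blast
  define B0 where "B0 = range f0"
  have infB0: "infinite B0" unfolding B0_def using f0(1) by (rule range_inj_infinite)
  have cB0: "countable B0" unfolding B0_def by simp
  have "\<forall>b\<in>B0. \<exists>F. finite F \<and> F \<subseteq> T \<and> b = ind F"
    using f0(2) BA unfolding B0_def AA_def by blast
  then obtain Fs where Fs: "\<And>b. b \<in> B0 \<Longrightarrow> finite (Fs b) \<and> Fs b \<subseteq> T \<and> b = ind (Fs b)"
    by metis
  define C where "C = (\<Union>b\<in>B0. Fs b)"
  have cC: "countable C" unfolding C_def using cB0 Fs countable_finite by (intro countable_UN) auto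
  have CT: "C \<subseteq> T" unfolding C_def using Fs by blast
  define K where "K = Pi\<^sub>E (topspace Z) (\<lambda>z. if z \<in> C then {0, 1} else {0::real})"
  have cK: "compactin P K"
    unfolding K_def compactin_PiE
    by (intro disjI2 ballI) (auto intro: finite_imp_compactin)
  have B0K: "B0 \<subseteq> K"
  proof
    fix b assume b: "b \<in> B0"
    define F where "F = Fs b"
    have bF: "b = ind F" using Fs[OF b] unfolding F_def by blast
    have FC: "F \<subseteq> C" using b unfolding C_def F_def by blast
    have "ind F \<in> K" unfolding K_def
    proof (rule PiE_I)
      fix z assume "z \<in> topspace Z"
      then show "ind F z \<in> (if z \<in> C then {0, 1} else {0})" using FC by (auto simp: ind_def)
    qed (simp add: ind_def)
    then show "b \<in> K" using bF by simp
  qed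
  obtain g where gK: "g \<in> K" and gd: "g \<in> P derived_set_of B0"
    using compactin_imp_Bolzano_Weierstrass[OF cK] infB0 B0K by blast
  have gz: "g z \<in> (if z \<in> C then {0, 1} else {0})" if "z \<in> topspace Z" for z
    using gK that unfolding K_def by (rule PiE_mem)
  define W where "W = {z \<in> topspace Z. g z = 1}"
  have WC: "W \<subseteq> C"
  proof
    fix z assume "z \<in> W"
    then have "z \<in> topspace Z" "g z = 1" unfolding W_def by auto
    have "g z \<in> (if z \<in> C then {0, 1} else {0})" using \<open>z \<in> topspace Z\<close> by (rule gz)
    show "z \<in> C"
    proof (rule ccontr)
      assume "z \<notin> C"
      then have "g z \<in> {0}" using \<open>g z \<in> (if z \<in> C then {0, 1} else {0})\<close> by simp
      then show False using \<open>g z = 1\<close> by simp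
    qed
  qed
  have gW: "g = ind W"
  proof
    fix z
    show "g z = ind W z"
    proof (cases "z \<in> topspace Z")
      case True
      then have "g z \<in> (if z \<in> C then {0, 1} else {0})" by (rule gz)
      then have g01: "g z = 0 \<or> g z = 1" by (cases "z \<in> C") auto
      have i1: "ind W z = (if z \<in> W then 1 else 0)" using True by (simp add: ind_def)
      have i2: "z \<in> W \<longleftrightarrow> g z = 1" using True by (simp add: W_def)
      show ?thesis using g01 i1 i2 by (cases "g z = 1") simp_all
    next
      case False
      have "g z = undefined" using gK False unfolding K_def by (rule PiE_arb)
      moreover have "ind W z = undefined" using False by (simp add: ind_def)
      ultimately show ?thesis by simp
    qed
  qed
  have WT: "W \<subseteq> T" using WC CT by blast
  have cW: "countable W" using WC cC countable_subset by blast
  have gC: "g \<in> CC" using ind_cont[OF WT cW] ind_P gW by simp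
  have "B \<subseteq> CC" using BA AA_sub by blast
  then have "Cp Z derived_set_of B = CC \<inter> P derived_set_of B"
    unfolding Cp_Z derived_set_of_subtopology by (simp add: Int_absorb1)
  moreover have "P derived_set_of B0 \<subseteq> P derived_set_of B"
    using f0(2) unfolding B0_def by (rule derived_set_of_mono)
  ultimately have "g \<in> Cp Z derived_set_of B" using gC gd by blast
  then show ?thesis using gC topspace_Cp by blast
qed

theorem proposition11:
  shows "\<exists>(X :: nat topology) (Y :: real topology).
           almost_discrete X \<and> frechet_urysohn X \<and> tychonoff_space X \<and>
           almost_discrete Y \<and> frechet_urysohn Y \<and> tychonoff_space Y \<and>
           \<not> weakly_grothendieck (prod_topology X Y)"
proof (intro exI[of _ fX.top] exI[of _ fY.top] conjI)
  show "almost_discrete fX.top" by (rule fX.almost_discrete_top)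
  show "frechet_urysohn fX.top" by (rule fX.frechet_top)
  show "tychonoff_space fX.top" by (rule fX.tychonoff_top)
  show "almost_discrete fY.top" by (rule fY.almost_discrete_top)
  show "frechet_urysohn fY.top" by (rule fY.frechet_top)
  show "tychonoff_space fY.top" by (rule fY.tychonoff_top)
  show "\<not> weakly_grothendieck Z"
    unfolding weakly_grothendieck_def g_space_def
  proof
    assume H: "\<forall>A. A \<subseteq> topspace (Cp Z) \<and>
          (\<forall>B. B \<subseteq> A \<and> infinite B \<longrightarrow> (\<exists>z \<in> topspace (Cp Z). z \<in> Cp Z derived_set_of B))
        \<longrightarrow> compactin (Cp Z) (Cp Z closure_of A)"
    have "AA \<subseteq> topspace (Cp Z)" using AA_sub topspace_Cp by simp
    moreover have "\<forall>B. B \<subseteq> AA \<and> infinite B \<longrightarrow> (\<exists>z \<in> topspace (Cp Z). z \<in> Cp Z derived_set_of B)"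
      using accum by blast
    ultimately have "compactin (Cp Z) (Cp Z closure_of AA)" using H by blast
    then show False using not_compact by blast
  qed
qed


end
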